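(* Let $X$ be an exponential vector space over a field $K$. If $x\in Q(X)$, then $L(x)=L(y)$ for every $y\in X\smallsetminus X_0$ with $y\leq x$.
   Context: An exponential vector space (evs) over a field $K$ is a partially ordered set $(X,\leq)$ with a binary operation $+$ on $X$ and a map $K\times X\to X$, $(\alpha,x)\mapsto \alpha x$, such that: (A1) $(X,+)$ is a commutative semigroup with identity $\theta$; (A2) $x\leq y$ implies $x+z\leq y+z$ and $\alpha x\leq \alpha y$ for all $z\in X$, $\alpha\in K$; (A3) $\alpha(x+y)=\alpha x+\alpha y$, $\alpha(\beta x)=(\alpha\beta)x$, $(\alpha+\beta)x\leq \alpha x+\beta x$, $1x=x$; (A4) $\alpha x=\theta$ iff $\alpha=0$ or $x=\theta$; (A5) $x+(-1)x=\theta$ iff $x\in X_0$, where $X_0:=\{z\in X: y\not\leq z \text{ for all } y\in X\smallsetminus\{z\}\}$ (the set of minimal elements, called the primitive space; it is a vector space over $K$); (A6) for each $x\in X$ there is $p\in X_0$ with $p\leq x$. For $x\in X\smallsetminus X_0$ let $L(x):=\{z\in X: z\geq \alpha x+p \text{ for some } \alpha\in K\smallsetminus\{0\},\ p\in X_0\}$. For $x\in X$ write $\downarrow x:=\{z\in X: z\leq x\}$. The feasible set is $Q(X):=\{x\in X\smallsetminus X_0: (\downarrow x\smallsetminus X_0)\subseteq L(x)\}$. *)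

theory Defs
  imports Main
begin

text \<open>An exponential vector space over a field 'k, with underlying set the whole type 'x.
  le is the partial order, add the addition, th the identity, sm the scalar multiplication.\<close>

definition primitive :: "('x \<Rightarrow> 'x \<Rightarrow> bool) \<Rightarrow> 'x set" where
  "primitive le = {z. \<forall>y. y \<noteq> z \<longrightarrow> \<not> le y z}"

definition evs :: "('x \<Rightarrow> 'x \<Rightarrow> bool) \<Rightarrow> ('x \<Rightarrow> 'x \<Rightarrow> 'x) \<Rightarrow> 'x
    \<Rightarrow> ('k::field \<Rightarrow> 'x \<Rightarrow> 'x) \<Rightarrow> bool" where
  "evs le add th sm \<longleftrightarrow>
     \<comment> \<open>partial order\<close>
     (\<forall>x. le x x) \<and> (\<forall>x y. le x y \<and> le y x \<longrightarrow> x = y) \<and>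
     (\<forall>x y z. le x y \<and> le y z \<longrightarrow> le x z) \<and>
     \<comment> \<open>(A1)\<close>
     (\<forall>x y z. add (add x y) z = add x (add y z)) \<and> (\<forall>x y. add x y = add y x) \<and>
     (\<forall>x. add x th = x) \<and>
     \<comment> \<open>(A2)\<close>
     (\<forall>x y z. le x y \<longrightarrow> le (add x z) (add y z)) \<and>
     (\<forall>x y a. le x y \<longrightarrow> le (sm a x) (sm a y)) \<and>
     \<comment> \<open>(A3)\<close>
     (\<forall>a x y. sm a (add x y) = add (sm a x) (sm a y)) \<and>
     (\<forall>a b x. sm a (sm b x) = sm (a * b) x) \<and>
     (\<forall>a b x. le (sm (a + b) x) (add (sm a x) (sm b x))) \<and>
     (\<forall>x. sm 1 x = x) \<and>
     \<comment> \<open>(A4)\<close>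
     (\<forall>a x. sm a x = th \<longleftrightarrow> a = 0 \<or> x = th) \<and>
     \<comment> \<open>(A5)\<close>
     (\<forall>x. add x (sm (-1) x) = th \<longleftrightarrow> x \<in> primitive le) \<and>
     \<comment> \<open>(A6)\<close>
     (\<forall>x. \<exists>p \<in> primitive le. le p x)"

definition Lset :: "('x \<Rightarrow> 'x \<Rightarrow> bool) \<Rightarrow> ('x \<Rightarrow> 'x \<Rightarrow> 'x)
    \<Rightarrow> ('k::field \<Rightarrow> 'x \<Rightarrow> 'x) \<Rightarrow> 'x \<Rightarrow> 'x set" where
  "Lset le add sm x = {z. \<exists>a p. a \<noteq> 0 \<and> p \<in> primitive le \<and> le (add (sm a x) p) z}"

definition feasible :: "('x \<Rightarrow> 'x \<Rightarrow> bool) \<Rightarrow> ('x \<Rightarrow> 'x \<Rightarrow> 'x)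
    \<Rightarrow> ('k::field \<Rightarrow> 'x \<Rightarrow> 'x) \<Rightarrow> 'x set" where
  "feasible le add sm = {x. x \<notin> primitive le \<and>
      ({z. le z x} - primitive le) \<subseteq> Lset le add sm x}"

end

theory Submission
  imports Defs
begin

theorem mainTheorem17:
  fixes le :: "'x \<Rightarrow> 'x \<Rightarrow> bool" and add :: "'x \<Rightarrow> 'x \<Rightarrow> 'x" and th :: 'x
    and sm :: "'k::field \<Rightarrow> 'x \<Rightarrow> 'x" and x y :: 'x
  assumes "evs le add th sm"
    and "x \<in> feasible le add sm"
    and "y \<notin> primitive le" and "le y x"
  shows "Lset le add sm x = Lset le add sm y"
proof -
  note E = assms(1)[unfolded evs_def]
  have trans: "\<And>a b c. le a b \<Longrightarrow> le b c \<Longrightarrow> le a c" using E by (elim conjE) metis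
  have mono_add: "\<And>a b c. le a b \<Longrightarrow> le (add a c) (add b c)" using E by (elim conjE) metis
  have mono_sm: "\<And>a b k. le a b \<Longrightarrow> le (sm k a) (sm k b)" using E by (elim conjE) metis
  have A5: "\<And>p. p \<in> primitive le \<longleftrightarrow> add p (sm (-1) p) = th" using E by (elim conjE) metis
  have assoc: "\<And>a b c. add (add a b) c = add a (add b c)" using E by (elim conjE) metis
  have comm: "\<And>a b. add a b = add b a" using E by (elim conjE) metis
  have unit: "\<And>a. add a th = a" using E by (elim conjE) metis
  have smadd: "\<And>k a b. sm k (add a b) = add (sm k a) (sm k b)" using E by (elim conjE) metis
  have smsm: "\<And>k l a. sm k (sm l a) = sm (k * l) a" using E by (elim conjE) metis
  have smth: "\<And>k. sm k th = th" using E by (elim conjE) metis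
  have primadd: "add p q \<in> primitive le" if "p \<in> primitive le" "q \<in> primitive le" for p q
  proof -
    have "add (add p q) (sm (-1) (add p q)) = add (add p (sm (-1) p)) (add q (sm (-1) q))"
      by (metis smadd assoc comm)
    also have "\<dots> = th" using that A5 unit by simp
    finally show ?thesis using A5 by blast
  qed
  have primsm: "sm k p \<in> primitive le" if "p \<in> primitive le" for p k
  proof -
    have "add (sm k p) (sm (-1) (sm k p)) = sm k (add p (sm (-1) p))"
      by (simp add: smadd smsm mult.commute)
    also have "\<dots> = th" using that A5 smth by simp
    finally show ?thesis using A5 by blast
  qed
  have "y \<in> Lset le add sm x" using assms(2-4) unfolding feasible_def by blast
  then obtain a p where ap: "a \<noteq> 0" "p \<in> primitive le" "le (add (sm a x) p) y"
    unfolding Lset_def by blast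
  show ?thesis
  proof
    show "Lset le add sm x \<subseteq> Lset le add sm y"
    proof
      fix z assume "z \<in> Lset le add sm x"
      then obtain b q where bq: "b \<noteq> 0" "q \<in> primitive le" "le (add (sm b x) q) z"
        unfolding Lset_def by blast
      have "le (add (sm b y) q) (add (sm b x) q)" using mono_add mono_sm assms(4) by blast
      then have "le (add (sm b y) q) z" using trans bq by blast
      then show "z \<in> Lset le add sm y" unfolding Lset_def using bq by blast
    qed
  next
    show "Lset le add sm y \<subseteq> Lset le add sm x"
    proof
      fix z assume "z \<in> Lset le add sm y"
      then obtain b q where bq: "b \<noteq> 0" "q \<in> primitive le" "le (add (sm b y) q) z"
        unfolding Lset_def by blast
      have "le (sm b (add (sm a x) p)) (sm b y)" using mono_sm ap by blast
      then have "le (add (sm b (add (sm a x) p)) q) (add (sm b y) q)" using mono_add by blast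
      moreover have "add (sm b (add (sm a x) p)) q = add (sm (b * a) x) (add (sm b p) q)"
        by (simp add: smadd smsm assoc)
      ultimately have "le (add (sm (b * a) x) (add (sm b p) q)) z" using trans bq by metis
      moreover have "add (sm b p) q \<in> primitive le" using primadd primsm ap bq by blast
      moreover have "b * a \<noteq> 0" using ap bq by simp
      ultimately show "z \<in> Lset le add sm x" unfolding Lset_def by blast
    qed
  qed
qed

end
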